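(* For every positive integer $n$, $$\sum_{j=1}^{n}\csc^4\left(\frac{(2j-1)\pi}{4n+2}\right) = \frac{8(n+1)n(n^2+n+1)}{3}.$$ *)

theory Defs
  imports Complex_Main
begin

definition csc :: "real \<Rightarrow> real" where
  "csc x = 1 / sin x"

end

theory Submission
  imports Defs "HOL-Computational_Algebra.Polynomial"
begin

fun A :: "nat \<Rightarrow> real poly" where
  "A 0 = 1"
| "A (Suc 0) = [:1, -4:]"
| "A (Suc (Suc m)) = [:2, -4:] * A (Suc m) - A m"

lemma A_cos: "cos (real (2*m+1) * x) = cos x * poly (A m) ((sin x)^2)"
proof (induction m rule: A.induct)
  case 1 then show ?case by simp
next
  case 2
  have "cos (3 * x) = cos (2*x + x)" by simp
  also have "\<dots> = cos x * (1 - 4 * (sin x)^2)"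
  proof -
    have h: "cos x * cos x = 1 - sin x * sin x" using cos_squared_eq[of x] by (simp add: power2_eq_square)
    have "cos (2*x + x) = (cos x * cos x - sin x * sin x) * cos x - 2 * sin x * cos x * sin x"
      unfolding cos_add cos_double sin_double by (simp add: power2_eq_square)
    also have "\<dots> = cos x * (cos x * cos x) - 3 * cos x * (sin x * sin x)" by (simp add: algebra_simps)
    also have "\<dots> = cos x * (1 - 4 * (sin x)^2)" unfolding h by (simp add: power2_eq_square algebra_simps)
    finally show ?thesis .
  qed
  finally show ?case by (simp add: numeral_eq_Suc)
next
  case (3 m)
  have e: "cos (real (2*Suc (Suc m)+1) * x) = 2 * cos (2*x) * cos (real (2*Suc m+1) * x) - cos (real (2*m+1) * x)"
  proof -
    have a: "real (2*Suc (Suc m)+1) * x = real (2*Suc m+1) * x + 2*x" by (simp add: algebra_simps)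
    have b: "real (2*m+1) * x = real (2*Suc m+1) * x - 2*x" by (simp add: algebra_simps)
    show ?thesis unfolding a b cos_add cos_diff by simp
  qed
  show ?case unfolding e 3 cos_double_sin by (simp add: algebra_simps)
qed

lemma A_deg: "degree (A m) \<le> m"
proof (induction m rule: A.induct)
  case (3 m)
  have "degree ([:2, -4:] * A (Suc m)) \<le> Suc (Suc m)"
    using degree_mult_le[of "[:2, -4:]" "A (Suc m)"] 3(1) by simp
  moreover have "degree (A m) \<le> Suc (Suc m)" using 3(2) by simp
  ultimately show ?case by (simp add: degree_diff_le)
qed auto

lemma A_coeffs: "coeff (A m) 0 = 1 \<and> coeff (A m) 1 = - 2 * real m * (real m + 1)
   \<and> coeff (A m) 2 = 2 * real m * (real m + 1) * (real m + 2) * (real m - 1) / 3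
   \<and> coeff (A m) m = (-4)^m"
proof (induction m rule: A.induct)
  case (3 m)
  have "coeff (A m) (Suc (Suc m)) = 0" using A_deg[of m] by (simp add: coeff_eq_0)
  moreover have "coeff (A (Suc m)) (Suc (Suc m)) = 0" using A_deg[of "Suc m"] by (simp add: coeff_eq_0)
  ultimately show ?case using 3 by (simp add: coeff_pCons numeral_eq_Suc algebra_simps add_divide_distrib split: nat.splits)
qed (auto simp: numeral_2_eq_2)

lemma prod_coeffs:
  fixes a :: "nat \<Rightarrow> real"
  assumes "finite S"
  shows "coeff (\<Prod>j\<in>S. [:1, - a j:]) 0 = 1 \<and> coeff (\<Prod>j\<in>S. [:1, - a j:]) 1 = - (\<Sum>j\<in>S. a j)
    \<and> coeff (\<Prod>j\<in>S. [:1, - a j:]) 2 = ((\<Sum>j\<in>S. a j)^2 - (\<Sum>j\<in>S. (a j)^2)) / 2"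
  using assms
proof (induction S rule: finite_induct)
  case empty then show ?case by (simp add: numeral_2_eq_2)
next
  case (insert b S)
  define q where "q = (\<Prod>j\<in>S. [:1, - a j:])"
  have P: "(\<Prod>j\<in>insert b S. [:1, - a j:]) = [:1, - a b:] * q"
    using insert by (simp add: q_def)
  have c0: "coeff ([:1, - a b:] * q) 0 = coeff q 0" by (simp add: mult_pCons_left)
  have c1: "coeff ([:1, - a b:] * q) 1 = coeff q 1 - a b * coeff q 0" by (simp add: mult_pCons_left)
  have c2: "coeff ([:1, - a b:] * q) 2 = coeff q 2 - a b * coeff q 1" by (simp add: mult_pCons_left numeral_2_eq_2)
  have s1: "(\<Sum>j\<in>insert b S. a j) = a b + (\<Sum>j\<in>S. a j)" using insert by simp
  have s2: "(\<Sum>j\<in>insert b S. (a j)^2) = (a b)^2 + (\<Sum>j\<in>S. (a j)^2)" using insert by simp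
  have ar: "((x + y)^2 - (z + w)) / 2 = (y^2 - w) / 2 + x * y" if "z = x^2" for x y z w :: real
    using that by (simp add: power2_eq_square field_simps)
  show ?case unfolding P c0 c1 c2 s1 s2 using insert.IH unfolding q_def[symmetric]
    by (simp add: ar)
qed

theorem mainTheorem19:
  fixes n :: nat
  assumes "n \<ge> 1"
  shows "(\<Sum>j=1..n. (csc ((2 * real j - 1) * pi / (4 * real n + 2))) ^ 4)
           = 8 * (real n + 1) * real n * ((real n)^2 + real n + 1) / 3"
proof -
  define th where "th j = (2 * real j - 1) * pi / (4 * real n + 2)" for j :: nat
  define s where "s j = (sin (th j))^2" for j
  define a where "a j = 1 / s j" for j
  have d: "4 * real n + 2 = 2 * (2 * real n + 1)" by simp
  have thb: "0 < th j \<and> th j < pi/2" if "j \<in> {1..n}" for j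
  proof -
    from that have j1: "1 \<le> real j" and jn: "real j \<le> real n" by auto
    have lt: "(2*real j - 1) * pi < (2*real n + 1) * pi" using jn
      by (intro mult_strict_right_mono) auto
    have p: "0 < (2*real j - 1) * pi" using j1 by simp
    have "th j = (2*real j - 1) * pi / (2 * (2 * real n + 1))" unfolding th_def d ..
    also have "\<dots> = ((2*real j - 1) * pi / (2 * real n + 1)) / 2" by simp
    finally have t: "th j = ((2*real j - 1) * pi / (2 * real n + 1)) / 2" .
    have "(2*real j - 1) * pi / (2 * real n + 1) < pi"
      using lt by (simp add: pos_divide_less_eq)
    moreover have "0 < (2*real j - 1) * pi / (2 * real n + 1)" using p by simp
    moreover have "\<And>y::real. 0 < y \<Longrightarrow> y < pi \<Longrightarrow> 0 < y / 2 \<and> y / 2 < pi / 2" by simp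
    ultimately show ?thesis unfolding t by blast
  qed
  have sinpos: "sin (th j) > 0" if "j \<in> {1..n}" for j
    using thb[OF that] by (intro sin_gt_zero) auto
  have spos: "s j > 0" if "j \<in> {1..n}" for j using sinpos[OF that] by (simp add: s_def)
  have inj: "inj_on s {1..n}"
  proof (rule inj_onI)
    fix i j assume ij: "i \<in> {1..n}" "j \<in> {1..n}" "s i = s j"
    have "sin (th i) = sin (th j)"
      using ij(3) less_imp_le[OF sinpos[OF ij(1)]] less_imp_le[OF sinpos[OF ij(2)]] unfolding s_def
      by (rule power2_eq_imp_eq)
    moreover have "- (pi/2) \<le> th i" "th i \<le> pi/2" "- (pi/2) \<le> th j" "th j \<le> pi/2"
      using thb[OF ij(1)] thb[OF ij(2)] by linarith+
    ultimately have "th i = th j" using sin_inj_pi by blast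
    hence "(2 * real i - 1) * pi = (2 * real j - 1) * pi" unfolding th_def by simp
    then show "i = j" by simp
  qed
  have root: "poly (A n) (s j) = 0" if "j \<in> {1..n}" for j
  proof -
    have rj: "real (2*j-1) = 2 * real j - 1" using that by (simp add: of_nat_diff)
    have "real (2*n+1) * th j = (2 * real n + 1) * ((2*real j - 1) * pi / (2 * (2 * real n + 1)))"
      unfolding th_def d by simp
    also have "\<dots> = (2*real j - 1) * pi / 2"
    proof -
      have hc: "\<And>c X::real. c > 0 \<Longrightarrow> c * (X / (2*c)) = X / 2" by (simp add: field_simps)
      show ?thesis by (rule hc) simp
    qed
    also have "\<dots> = real (2*j-1) * (pi/2)" unfolding rj by simp
    finally have e: "real (2*n+1) * th j = real (2*j-1) * (pi/2)" .
    have o: "odd (2*j-1)" using that by auto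
    have "cos (real (2*n+1) * th j) = 0" unfolding cos_zero_iff using e o by blast
    moreover have "cos (th j) > 0" using thb[OF that] by (intro cos_gt_zero) auto
    ultimately show ?thesis using A_cos[of n "th j"] unfolding s_def by simp
  qed
  define R where "R = (\<Prod>j\<in>{1..n}. [:1, - a j:])"
  have degR: "degree R \<le> n"
  proof -
    have "degree R \<le> sum (degree \<circ> (\<lambda>j. [:1, - a j:])) {1..n}"
      unfolding R_def by (rule degree_prod_sum_le) simp
    also have "\<dots> \<le> sum (\<lambda>j. 1) {1..n}" by (intro sum_mono) simp
    finally show ?thesis by simp
  qed
  have rootR: "poly R (s j) = 0" if "j \<in> {1..n}" for j
  proof -
    have "poly [:1, - a j:] (s j) = 0" using spos[OF that] by (simp add: a_def)
    then show ?thesis unfolding R_def poly_prod using that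
      by (intro prod_zero) auto
  qed
  define Q where "Q = smult (coeff R n) (A n) - smult (coeff (A n) n) R"
  have Q0: "Q = 0"
  proof (rule ccontr)
    assume nz: "Q \<noteq> 0"
    have dQ: "degree Q \<le> n" unfolding Q_def using degR A_deg[of n]
      by (intro degree_diff_le) (auto intro: le_trans[OF degree_smult_le])
    have "coeff Q n = 0" by (simp add: Q_def)
    with nz dQ have dQ': "degree Q < n"
      by (metis le_neq_implies_less leading_coeff_0_iff)
    have "s ` {1..n} \<subseteq> {x. poly Q x = 0}" using root rootR by (auto simp: Q_def)
    hence "card (s ` {1..n}) \<le> card {x. poly Q x = 0}"
      by (intro card_mono poly_roots_finite nz)
    also have "\<dots> \<le> degree Q" by (rule card_poly_roots_bound) (use nz in auto)
    finally show False using card_image[OF inj] dQ' by simp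
  qed
  have cn: "coeff (A n) n = (-4)^n" using A_coeffs by blast
  have "poly Q 0 = 0" using Q0 by simp
  hence "coeff R n = coeff (A n) n"
    by (simp add: Q_def poly_0_coeff_0 A_coeffs prod_coeffs R_def)
  hence "Q = smult ((-4)^n) (A n - R)" by (simp add: Q_def cn smult_diff_right)
  hence AR: "A n = R" using Q0 by simp
  have c1: "(\<Sum>j\<in>{1..n}. a j) = 2 * real n * (real n + 1)"
    using A_coeffs[of n] prod_coeffs[of "{1..n}" a] unfolding AR R_def by simp
  have c2: "((\<Sum>j\<in>{1..n}. a j)^2 - (\<Sum>j\<in>{1..n}. (a j)^2)) / 2
      = 2 * real n * (real n + 1) * (real n + 2) * (real n - 1) / 3"
    using A_coeffs[of n] prod_coeffs[of "{1..n}" a] unfolding AR R_def by simp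
  have "(\<Sum>j=1..n. (csc ((2 * real j - 1) * pi / (4 * real n + 2))) ^ 4) = (\<Sum>j\<in>{1..n}. (a j)^2)"
    by (intro sum.cong) (auto simp: csc_def a_def s_def th_def power_divide power_mult[symmetric])
  also have "\<dots> = 8 * (real n + 1) * real n * ((real n)^2 + real n + 1) / 3"
    using c2 unfolding c1 by (simp add: field_simps power2_eq_square)
  finally show ?thesis .
qed

end
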